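(* For $i\geq 1$ let $t^e_i = \frac{(2i-1)(2i-1+(-1)^i)}{2}$ be the $i$th even triangular number ($0,6,10,28,\dots$) and $t^o_i = \frac{(2i-1)(2i-1-(-1)^i)}{2}$ the $i$th odd triangular number ($1,3,15,21,\dots$). If $n$ is an even integer, then \[ p(n) = \sum_{i\geq 1} p_2\!\left(\frac{n-t^e_i}{2}\right), \] and if $n$ is an odd integer, then \[ p(n) = \sum_{i\geq 1} p_2\!\left(\frac{n-t^o_i}{2}\right). \]
   Context: $p(m)$ denotes the number of partitions of $m$ (with $p(0)=1$, $p(m)=0$ for $m<0$). A two-color partition of $m$ is a partition of $m$ in which each part size may occur in either of two distinguished colors; $p_2(m)$ is the number of two-color partitions of $m$, i.e. $p_2(m)=\sum_{i=0}^m p(i)p(m-i)$, with $p_2(m)=0$ for $m<0$. Triangular numbers are $k(k+1)/2$, $k\geq 0$. *)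

theory Defs
  imports Main "HOL-Library.Multiset"
begin

definition partitions_of :: "nat \<Rightarrow> nat multiset set" where
  "partitions_of m = {M. (\<forall>x\<in>#M. 0 < x) \<and> sum_mset M = m}"

definition p :: "int \<Rightarrow> nat" where
  "p m = (if m < 0 then 0 else card (partitions_of (nat m)))"

definition p2 :: "int \<Rightarrow> nat" where
  "p2 m = (if m < 0 then 0 else (\<Sum>i = 0..nat m. p (int i) * p (m - int i)))"

definition te :: "nat \<Rightarrow> int" where
  "te i = ((2 * int i - 1) * (2 * int i - 1 + (-1) ^ i)) div 2"

definition to :: "nat \<Rightarrow> int" where
  "to i = ((2 * int i - 1) * (2 * int i - 1 - (-1) ^ i)) div 2"

end

theory Submission
  imports Defs "HOL-Computational_Algebra.Formal_Power_Series"
begin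

unbundle fps_syntax


fun QB :: "'a::comm_ring_1 \<Rightarrow> nat \<Rightarrow> nat \<Rightarrow> 'a" where
  "QB q 0 k = (if k = 0 then 1 else 0)"
| "QB q (Suc N) 0 = 1"
| "QB q (Suc N) (Suc k) = QB q N (Suc k) + q ^ (N - k) * QB q N k"

lemma QB_big: "N < k \<Longrightarrow> QB q N k = 0"
proof (induction N arbitrary: k)
  case 0 thus ?case by simp
next
  case (Suc N) thus ?case by (cases k) auto
qed

lemma QB_0[simp]: "QB q N 0 = 1" by (cases N) auto

lemma QB_diag: "QB q N N = 1"
  by (induction N) (auto simp: QB_big)

definition PF :: "'a::comm_ring_1 \<Rightarrow> nat \<Rightarrow> 'a" where
  "PF q n = (\<Prod>i\<in>{1..n}. 1 - q ^ i)"

lemma PF_Suc: "PF q (Suc n) = PF q n * (1 - q ^ Suc n)"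
  by (simp add: PF_def prod.cl_ivl_Suc)

lemma PF_0[simp]: "PF q 0 = 1" by (simp add: PF_def)

lemma QB_PF: "k \<le> N \<Longrightarrow> QB q N k * PF q k * PF q (N - k) = PF q N"
proof (induction N arbitrary: k)
  case 0 thus ?case by simp
next
  case (Suc N)
  show ?case
  proof (cases k)
    case 0 thus ?thesis by simp
  next
    case (Suc k')
    show ?thesis
    proof (cases "k' = N")
      case True thus ?thesis using Suc by (simp add: QB_big QB_diag)
    next
      case False
      hence lt: "k' < N" using Suc.prems Suc by simp
      have IH1: "QB q N (Suc k') * PF q (Suc k') * PF q (N - Suc k') = PF q N"
        using Suc.IH lt by simp
      have IH2: "QB q N k' * PF q k' * PF q (N - k') = PF q N"
        using Suc.IH lt by simp
      have e1: "PF q (N - k') = PF q (N - Suc k') * (1 - q ^ (N - k'))"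
        using lt PF_Suc[of q "N - Suc k'"] by (simp add: Suc_diff_Suc)
      have e2: "q ^ (N - k') * q ^ Suc k' = q ^ Suc N"
      proof -
        have "N - k' + Suc k' = Suc N" using lt by simp
        thus ?thesis by (metis power_add)
      qed
      have "QB q (Suc N) k * PF q k * PF q (Suc N - k)
          = (QB q N (Suc k') + q ^ (N - k') * QB q N k') * PF q (Suc k') * PF q (N - k')"
        using Suc by simp
      also have "\<dots> = (QB q N (Suc k') * PF q (Suc k') * PF q (N - Suc k')) * (1 - q ^ (N - k'))
                      + q ^ (N - k') * (QB q N k' * PF q k' * PF q (N - k')) * (1 - q ^ Suc k')"
        unfolding e1 PF_Suc by (simp add: algebra_simps)
      also have "\<dots> = PF q N * (1 - q ^ (N - k') * q ^ Suc k')"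
        unfolding IH1 IH2 by (simp add: algebra_simps)
      also have "\<dots> = PF q (Suc N)" using e2 PF_Suc[of q N] by simp
      finally show ?thesis .
    qed
  qed
qed

lemma tri_Suc: "Suc k * (Suc k - 1) div 2 = k * (k - 1) div 2 + k"
proof -
  have "Suc k * (Suc k - 1) = k * (k - 1) + 2 * k" by (cases k) (auto simp: algebra_simps)
  thus ?thesis by simp
qed

lemma qbinom:
  fixes q z w :: "'a::comm_ring_1"
  shows "(\<Prod>i<N. w + z * q ^ i) = (\<Sum>k\<le>N. QB q N k * q ^ (k * (k - 1) div 2) * z ^ k * w ^ (N - k))"
proof (induction N)
  case 0 thus ?case by simp
next
  case (Suc N)
  define S where "S = (\<Sum>k\<le>N. QB q N k * q ^ (k * (k - 1) div 2) * z ^ k * w ^ (N - k))"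
  have A: "w ^ Suc N + (\<Sum>k\<le>N. QB q N (Suc k) * q ^ (Suc k * (Suc k - 1) div 2) * z ^ Suc k * w ^ (N - k)) = w * S"
  proof -
    have "w ^ Suc N + (\<Sum>k\<le>N. QB q N (Suc k) * q ^ (Suc k * (Suc k - 1) div 2) * z ^ Suc k * w ^ (N - k))
        = (\<Sum>k\<le>Suc N. QB q N k * q ^ (k * (k - 1) div 2) * z ^ k * w ^ (Suc N - k))"
      by (subst sum.atMost_Suc_shift) simp
    also have "\<dots> = (\<Sum>k\<le>N. QB q N k * q ^ (k * (k - 1) div 2) * z ^ k * w ^ (Suc N - k))"
      by (simp add: QB_big)
    also have "\<dots> = w * S" unfolding S_def sum_distrib_left
      by (rule sum.cong) (auto simp: Suc_diff_le algebra_simps)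
    finally show ?thesis .
  qed
  have B: "(\<Sum>k\<le>N. q ^ (N - k) * QB q N k * q ^ (Suc k * (Suc k - 1) div 2) * z ^ Suc k * w ^ (N - k))
         = z * q ^ N * S"
    unfolding S_def sum_distrib_left
  proof (rule sum.cong)
    fix k assume "k \<in> {..N}"
    hence "q ^ (N - k) * q ^ (Suc k * (Suc k - 1) div 2) = q ^ N * q ^ (k * (k - 1) div 2)"
      unfolding tri_Suc by (simp add: power_add[symmetric])
    thus "q ^ (N - k) * QB q N k * q ^ (Suc k * (Suc k - 1) div 2) * z ^ Suc k * w ^ (N - k) =
         z * q ^ N * (QB q N k * q ^ (k * (k - 1) div 2) * z ^ k * w ^ (N - k))"
      by (simp add: algebra_simps)
  qed simp
  have "(\<Sum>k\<le>Suc N. QB q (Suc N) k * q ^ (k * (k - 1) div 2) * z ^ k * w ^ (Suc N - k))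
      = w ^ Suc N + (\<Sum>k\<le>N. (QB q N (Suc k) + q ^ (N - k) * QB q N k) * q ^ (Suc k * (Suc k - 1) div 2) * z ^ Suc k * w ^ (N - k))"
    by (subst sum.atMost_Suc_shift) simp
  also have "\<dots> = w ^ Suc N + (\<Sum>k\<le>N. QB q N (Suc k) * q ^ (Suc k * (Suc k - 1) div 2) * z ^ Suc k * w ^ (N - k))
      + (\<Sum>k\<le>N. q ^ (N - k) * QB q N k * q ^ (Suc k * (Suc k - 1) div 2) * z ^ Suc k * w ^ (N - k))"
    by (simp add: algebra_simps sum.distrib)
  also have "\<dots> = w * S + z * q ^ N * S" using A B by simp
  also have "\<dots> = (\<Prod>i<Suc N. w + z * q ^ i)" using Suc.IH S_def by (simp add: algebra_simps)
  finally show ?case by simp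
qed



definition pset :: "nat \<Rightarrow> nat \<Rightarrow> nat multiset set" where
  "pset N m = {M \<in> partitions_of m. \<forall>x\<in>#M. x \<le> N}"

lemma size_le_sum: "(\<forall>x\<in>#M. 0 < x) \<Longrightarrow> size M \<le> sum_mset (M::nat multiset)"
  by (induction M) auto

lemma elem_le_sum: "x \<in># M \<Longrightarrow> x \<le> sum_mset (M::nat multiset)"
  by (induction M) auto

lemma finite_partitions: "finite (partitions_of m)"
proof -
  have "partitions_of m \<subseteq> (\<Union>s\<in>{..m}. multisets_of_size {1..m} s)"
    unfolding partitions_of_def multisets_of_size_def
    using size_le_sum elem_le_sum by fastforce
  moreover have "finite (\<Union>s\<in>{..m}. multisets_of_size {1..m} s)" by auto
  ultimately show ?thesis by (rule finite_subset)
qed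

lemma finite_pset: "finite (pset N m)"
  unfolding pset_def using finite_partitions by auto

lemma pset_big: "m \<le> N \<Longrightarrow> pset N m = partitions_of m"
  unfolding pset_def partitions_of_def using elem_le_sum by fastforce

lemma pset_0: "pset 0 m = (if m = 0 then {{#}} else {})"
proof -
  have "M \<in> pset 0 m \<longleftrightarrow> M = {#} \<and> m = 0" for M
  proof (cases "M = {#}")
    case False
    then obtain x where "x \<in># M" by (meson multiset_nonemptyE)
    thus ?thesis unfolding pset_def partitions_of_def using False by fastforce
  qed (auto simp: pset_def partitions_of_def)
  thus ?thesis by auto
qed

lemma pset_Suc_split:
  "pset (Suc N) m = pset N m \<union> {M \<in> pset (Suc N) m. Suc N \<in># M}"
  unfolding pset_def by (auto simp: le_Suc_eq)

lemma pset_Suc_bij: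
  assumes "Suc N \<le> m"
  shows "bij_betw (add_mset (Suc N)) (pset (Suc N) (m - Suc N)) {M \<in> pset (Suc N) m. Suc N \<in># M}"
proof (rule bij_betw_byWitness[where f' = "\<lambda>M. M - {#Suc N#}"])
  show "\<forall>a\<in>pset (Suc N) (m - Suc N). add_mset (Suc N) a - {#Suc N#} = a" by simp
  show "\<forall>a'\<in>{M \<in> pset (Suc N) m. Suc N \<in># M}. add_mset (Suc N) (a' - {#Suc N#}) = a'"
    by (simp add: insert_DiffM)
  show "add_mset (Suc N) ` pset (Suc N) (m - Suc N) \<subseteq> {M \<in> pset (Suc N) m. Suc N \<in># M}"
    using assms unfolding pset_def partitions_of_def by auto
  show "(\<lambda>M. M - {#Suc N#}) ` {M \<in> pset (Suc N) m. Suc N \<in># M} \<subseteq> pset (Suc N) (m - Suc N)"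
    unfolding pset_def partitions_of_def
    by (auto dest: in_diffD simp: sum_mset.remove)
qed

lemma card_pset_Suc:
  "card (pset (Suc N) m) = card (pset N m) + (if Suc N \<le> m then card (pset (Suc N) (m - Suc N)) else 0)"
proof -
  have d: "pset N m \<inter> {M \<in> pset (Suc N) m. Suc N \<in># M} = {}"
    unfolding pset_def by auto
  have "card (pset (Suc N) m) = card (pset N m) + card {M \<in> pset (Suc N) m. Suc N \<in># M}"
    by (subst pset_Suc_split) (rule card_Un_disjoint, auto simp: finite_pset d)
  moreover have "card {M \<in> pset (Suc N) m. Suc N \<in># M} = (if Suc N \<le> m then card (pset (Suc N) (m - Suc N)) else 0)"
  proof (cases "Suc N \<le> m")
    case True thus ?thesis using bij_betw_same_card[OF pset_Suc_bij[OF True]] by simp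
  next
    case False
    have "{M \<in> pset (Suc N) m. Suc N \<in># M} = {}"
      using False unfolding pset_def partitions_of_def using elem_le_sum by fastforce
    thus ?thesis using False by (metis card.empty)
  qed
  ultimately show ?thesis by simp
qed


definition eqm :: "nat \<Rightarrow> int fps \<Rightarrow> int fps \<Rightarrow> bool" where
  "eqm m f g \<longleftrightarrow> (\<forall>i\<le>m. f $ i = g $ i)"

lemma eqm_refl[simp]: "eqm m f f" by (simp add: eqm_def)
lemma eqm_sym: "eqm m f g \<Longrightarrow> eqm m g f" by (simp add: eqm_def)
lemma eqm_trans[trans]: "eqm m f g \<Longrightarrow> eqm m g h \<Longrightarrow> eqm m f h" by (simp add: eqm_def)
lemma eqm_mono: "eqm m f g \<Longrightarrow> k \<le> m \<Longrightarrow> eqm k f g" by (simp add: eqm_def)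

lemma eqm_mult_right: "eqm m f g \<Longrightarrow> eqm m (f * h) (g * h)"
  unfolding eqm_def fps_mult_nth by (auto intro!: sum.cong)

lemma eqm_mult_left: "eqm m f g \<Longrightarrow> eqm m (h * f) (h * g)"
  using eqm_mult_right[of m f g h] by (simp add: mult.commute)

lemma eqm_mult: "eqm m f f' \<Longrightarrow> eqm m g g' \<Longrightarrow> eqm m (f * g) (f' * g')"
  by (meson eqm_mult_left eqm_mult_right eqm_trans)

lemma eqm_add: "eqm m f f' \<Longrightarrow> eqm m g g' \<Longrightarrow> eqm m (f + g) (f' + g')"
  by (simp add: eqm_def)

lemma eqm_sum: "(\<And>k. k \<in> S \<Longrightarrow> eqm m (f k) (g k)) \<Longrightarrow> eqm m (sum f S) (sum g S)"
  unfolding eqm_def fps_sum_nth by (auto intro!: sum.cong)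

lemma eqm_Xpow_big: "m < e \<Longrightarrow> eqm m (fps_X ^ e * f) 0"
  unfolding eqm_def by (simp add: fps_X_power_mult_nth)

lemma eqm_Xpow: "m < e \<or> eqm m f g \<Longrightarrow> eqm m (fps_X ^ e * f) (fps_X ^ e * g)"
  by (metis eqm_Xpow_big eqm_mult_left eqm_sym eqm_trans)

lemma eqm_cancel2: "eqm m (2 * f) (2 * g) \<Longrightarrow> eqm m f g"
  unfolding eqm_def by (simp add: numeral_fps_const)

lemma prod_stable:
  assumes "\<And>j. m < j \<Longrightarrow> eqm m (f j) 1" "m \<le> N"
  shows "eqm m (\<Prod>j\<in>{1..N}. f j) (\<Prod>j\<in>{1..m}. f j)"
  using assms(2)
proof (induction N)
  case 0 thus ?case by simp
next
  case (Suc N)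
  show ?case
  proof (cases "m = Suc N")
    case True thus ?thesis by simp
  next
    case False
    hence mN: "m \<le> N" using Suc by simp
    have "(\<Prod>j\<in>{1..Suc N}. f j) = (\<Prod>j\<in>{1..N}. f j) * f (Suc N)"
      by (simp add: prod.cl_ivl_Suc)
    moreover have "eqm m ((\<Prod>j\<in>{1..N}. f j) * f (Suc N)) ((\<Prod>j\<in>{1..m}. f j) * 1)"
      using Suc.IH[OF mN] assms(1)[of "Suc N"] mN by (intro eqm_mult) auto
    ultimately show ?thesis by simp
  qed
qed

lemma eqm_one_plus: "m < j \<Longrightarrow> eqm m (1 + fps_X ^ j * c) 1"
  using eqm_add[OF eqm_refl[of m 1] eqm_Xpow_big[of m j c]] by simp

lemma eqm_one_minus: "m < j \<Longrightarrow> eqm m (1 - fps_X ^ j * c) 1"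
  using eqm_one_plus[of m j "-c"] by simp

definition E :: "nat \<Rightarrow> int fps" where "E N = (\<Prod>j\<in>{1..N}. 1 - fps_X ^ j)"

lemma E_stable: "m \<le> N \<Longrightarrow> eqm m (E N) (E m)"
  unfolding E_def using eqm_one_minus[of m _ 1] by (intro prod_stable) auto

definition PB :: "nat \<Rightarrow> int fps" where "PB N = Abs_fps (\<lambda>m. int (card (pset N m)))"

lemma PB_Suc: "PB (Suc N) = PB N + fps_X ^ Suc N * PB (Suc N)"
proof (rule fps_ext)
  fix m
  show "PB (Suc N) $ m = (PB N + fps_X ^ Suc N * PB (Suc N)) $ m"
    unfolding PB_def fps_add_nth fps_X_power_mult_nth
    by (subst card_pset_Suc) auto
qed

lemma PB_0: "PB 0 = 1"
  by (rule fps_ext) (simp add: PB_def pset_0)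

lemma PB_E: "PB N * E N = 1"
proof (induction N)
  case 0 thus ?case by (simp add: PB_0 E_def)
next
  case (Suc N)
  have "E (Suc N) = E N * (1 - fps_X ^ Suc N)" by (simp add: E_def prod.cl_ivl_Suc)
  moreover have "PB (Suc N) * (1 - fps_X ^ Suc N) = PB N"
    using PB_Suc[of N] by (simp add: algebra_simps)
  ultimately have "PB (Suc N) * E (Suc N) = PB N * E N"
    by (metis mult.assoc mult.commute)
  thus ?case using Suc.IH by simp
qed

definition P :: "int fps" where "P = Abs_fps (\<lambda>m. int (p (int m)))"

lemma P_PB: assumes "m \<le> N" shows "eqm m P (PB N)"
proof -
  have "p (int i) = card (pset N i)" if "i \<le> m" for i
    using pset_big[of i N] that \<open>m \<le> N\<close> by (simp add: p_def)
  thus ?thesis unfolding eqm_def P_def PB_def by simp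
qed

lemma PE: "m \<le> N \<Longrightarrow> eqm m (P * E N) 1"
  using eqm_mult_right[OF P_PB[of m N], of "E N"] PB_E by simp



definition tri :: "nat \<Rightarrow> nat" where "tri k = k * (k - 1) div 2"

lemma tri_0[simp]: "tri 0 = 0" by (simp add: tri_def)
lemma tri_S: "tri (Suc k) = tri k + k" unfolding tri_def by (rule tri_Suc)

lemma tri_add: "tri (a + b) = tri a + tri b + a * b"
  by (induction b) (simp_all add: tri_S algebra_simps)

lemma tri2: "2 * tri i + i = i * i"
  by (induction i) (simp_all add: tri_S algebra_simps)

lemma L1: assumes "i \<le> n" shows "tri (n - i) + n * (2 * n - (n - i)) = tri n + n * n + tri (Suc i)"
proof -
  obtain k where n: "n = k + i" using assms by (metis le_add_diff_inverse2)
  have a: "2 * n - (n - i) = k + 2 * i" using n by simp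
  have "tri (n - i) + n * (2 * n - (n - i)) = tri k + (k + i) * (k + 2 * i)" using n a by simp
  also have "\<dots> = tri k + tri i + k * i + (k + i) * (k + i) + tri i + i"
    using tri2[of i] by (simp add: algebra_simps)
  also have "\<dots> = tri n + n * n + tri (Suc i)" using n by (simp add: tri_add tri_S)
  finally show ?thesis .
qed

lemma L2: assumes "i \<le> n" shows "tri (i + n) + n * (2 * n - (i + n)) = tri n + n * n + tri i"
proof -
  obtain r where n: "n = i + r" using assms by (metis le_add_diff_inverse)
  have "tri (i + n) + n * (2 * n - (i + n)) = tri (i + (i + r)) + (i + r) * r" using n by simp
  also have "\<dots> = tri i + tri (i + r) + i * (i + r) + (i + r) * r" by (simp add: tri_add)
  also have "\<dots> = tri n + n * n + tri i" using n by (simp add: algebra_simps)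
  finally show ?thesis .
qed

lemma Xpow_cancel: "fps_X ^ c * f = fps_X ^ c * (g :: int fps) \<Longrightarrow> f = g"
proof (rule fps_ext)
  fix i assume "fps_X ^ c * f = fps_X ^ c * g"
  hence "(fps_X ^ c * f) $ (i + c) = (fps_X ^ c * g) $ (i + c)" by simp
  thus "f $ i = g $ i" by (simp add: fps_X_power_mult_nth)
qed

definition DD :: "nat \<Rightarrow> int fps" where
  "DD n = (\<Prod>j\<in>{1..n}. 1 + fps_X ^ j) * (\<Prod>i<n. 1 + fps_X ^ i)"

lemma sum_lessThan_tri: "(\<Sum>i<n. i) = tri n"
  by (induction n) (simp_all add: tri_S)

lemma prod_side: "(\<Prod>i<2 * n. fps_X ^ n + 1 * fps_X ^ i) = fps_X ^ (tri n + n * n) * (DD n :: int fps)"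
proof -
  define g where "g i = fps_X ^ n + (fps_X :: int fps) ^ i" for i
  have "(\<Prod>i<2 * n. g i) = (\<Prod>i\<in>{0..<n}. g i) * (\<Prod>i\<in>{n..<n+n}. g i)"
    by (simp add: prod.atLeastLessThan_concat atLeast0LessThan[symmetric] mult_2)
  also have "(\<Prod>i\<in>{n..<n+n}. g i) = (\<Prod>i\<in>{0..<n}. g (i + n))"
    using prod.shift_bounds_nat_ivl[of g 0 n n] by simp
  also have "\<dots> = (\<Prod>i\<in>{0..<n}. fps_X ^ n * (1 + fps_X ^ i))"
    by (simp add: g_def power_add algebra_simps)
  also have "\<dots> = fps_X ^ (n * n) * (\<Prod>i<n. 1 + fps_X ^ i)"
    by (simp add: prod.distrib atLeast0LessThan power_mult)
  also have "(\<Prod>i\<in>{0..<n}. g i) = (\<Prod>i\<in>{0..<n}. fps_X ^ i * (1 + fps_X ^ (n - i)))"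
    by (rule prod.cong) (auto simp: g_def algebra_simps power_add[symmetric])
  also have "\<dots> = fps_X ^ (\<Sum>i<n. i) * (\<Prod>i\<in>{0..<n}. 1 + fps_X ^ (n - i))"
    by (simp add: prod.distrib atLeast0LessThan power_sum)
  also have "(\<Prod>i\<in>{0..<n}. 1 + fps_X ^ (n - i)) = (\<Prod>i\<in>{1..n}. 1 + (fps_X :: int fps) ^ (n - (n - i)))"
    by (subst prod.atLeastLessThan_rev_at_least_Suc_atMost) simp
  also have "\<dots> = (\<Prod>i\<in>{1..n}. 1 + fps_X ^ i)"
    by (rule prod.cong) auto
  finally show ?thesis unfolding g_def DD_def sum_lessThan_tri
    by (simp add: power_add algebra_simps)
qed


lemma sum_side:
  "(\<Sum>k\<le>2 * n. QB fps_X (2 * n) k * fps_X ^ (k * (k - 1) div 2) * 1 ^ k * (fps_X ^ n) ^ (2 * n - k))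
   = fps_X ^ (tri n + n * n) * ((\<Sum>i\<le>n. QB fps_X (2 * n) (n - i) * fps_X ^ tri (Suc i))
       + (\<Sum>i\<in>{1..n}. QB fps_X (2 * n) (i + n) * (fps_X :: int fps) ^ tri i))"
proof -
  define f where "f k = QB fps_X (2 * n) k * (fps_X :: int fps) ^ (tri k + n * (2 * n - k))" for k
  have "(\<Sum>k\<le>2 * n. QB fps_X (2 * n) k * fps_X ^ (k * (k - 1) div 2) * 1 ^ k * (fps_X ^ n) ^ (2 * n - k))
     = (\<Sum>k\<le>2 * n. f k)"
    by (rule sum.cong) (simp_all only: f_def tri_def power_add power_mult power_one mult_1_right mult.assoc)
  also have "\<dots> = (\<Sum>k\<in>{0..n + n}. f k)"
    by (simp add: mult_2 atLeast0AtMost)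
  also have "\<dots> = (\<Sum>k\<in>{0..n}. f k) + (\<Sum>k\<in>{n + 1..n + n}. f k)"
    by (rule sum.ub_add_nat) simp
  also have "(\<Sum>k\<in>{0..n}. f k) = (\<Sum>i\<in>{0..n}. f (n + 0 - i))"
    by (rule sum.atLeastAtMost_rev)
  also have "\<dots> = (\<Sum>i\<le>n. fps_X ^ (tri n + n * n) * (QB fps_X (2 * n) (n - i) * fps_X ^ tri (Suc i)))"
    unfolding atLeast0AtMost
  proof (rule sum.cong)
    fix i assume "i \<in> {..n}"
    hence "f (n + 0 - i) = QB fps_X (2 * n) (n - i) * fps_X ^ (tri n + n * n + tri (Suc i))"
      unfolding f_def using L1[of i n] by simp
    thus "f (n + 0 - i) = fps_X ^ (tri n + n * n) * (QB fps_X (2 * n) (n - i) * fps_X ^ tri (Suc i))"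
      by (simp only: power_add mult.assoc mult.commute mult.left_commute)
  qed simp
  also have "(\<Sum>k\<in>{n + 1..n + n}. f k) = (\<Sum>i\<in>{1..n}. f (i + n))"
    using sum.shift_bounds_cl_nat_ivl[of f 1 n n] by (simp add: add.commute)
  also have "\<dots> = (\<Sum>i\<in>{1..n}. fps_X ^ (tri n + n * n) * (QB fps_X (2 * n) (i + n) * fps_X ^ tri i))"
  proof (rule sum.cong)
    fix i assume "i \<in> {1..n}"
    hence "f (i + n) = QB fps_X (2 * n) (i + n) * fps_X ^ (tri n + n * n + tri i)"
      unfolding f_def using L2[of i n] by simp
    thus "f (i + n) = fps_X ^ (tri n + n * n) * (QB fps_X (2 * n) (i + n) * fps_X ^ tri i)"
      by (simp only: power_add mult.assoc mult.commute mult.left_commute)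
  qed simp
  finally show ?thesis by (simp only: sum_distrib_left distrib_left)
qed

lemma finite_JTP:
  "DD n = (\<Sum>i\<le>n. QB fps_X (2 * n) (n - i) * fps_X ^ tri (Suc i))
       + (\<Sum>i\<in>{1..n}. QB fps_X (2 * n) (i + n) * (fps_X :: int fps) ^ tri i)"
proof (rule Xpow_cancel[of "tri n + n * n"])
  show "fps_X ^ (tri n + n * n) * DD n = fps_X ^ (tri n + n * n) * ((\<Sum>i\<le>n. QB fps_X (2 * n) (n - i) * fps_X ^ tri (Suc i))
       + (\<Sum>i\<in>{1..n}. QB fps_X (2 * n) (i + n) * (fps_X :: int fps) ^ tri i))"
    using qbinom[of "fps_X ^ n" 1 "fps_X :: int fps" "2 * n"] 
    unfolding prod_side[of n] sum_side[of n] .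
qed



definition dil :: "int fps \<Rightarrow> int fps" where
  "dil f = Abs_fps (\<lambda>d. if even d then f $ (d div 2) else 0)"

lemma dil_nth: "dil f $ d = (if even d then f $ (d div 2) else 0)"
  by (simp add: dil_def)

lemma dil_mult: "dil (f * g) = dil f * dil g"
proof (rule fps_ext)
  fix d
  show "dil (f * g) $ d = (dil f * dil g) $ d"
  proof (cases "even d")
    case False
    have "(dil f * dil g) $ d = (\<Sum>i=0..d. dil f $ i * dil g $ (d - i))" by (simp add: fps_mult_nth)
    also have "\<dots> = 0"
      by (rule sum.neutral) (use False in \<open>auto simp: dil_nth\<close>)
    finally show ?thesis using False by (simp add: dil_nth)
  next
    case True
    then obtain e where d: "d = 2 * e" by blast
    define h where "h i = dil f $ i * dil g $ (d - i)" for i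
    have "(dil f * dil g) $ d = (\<Sum>i\<in>{0..d}. h i)" by (simp add: fps_mult_nth h_def)
    also have "\<dots> = (\<Sum>i\<in>(\<lambda>a. 2 * a) ` {0..e}. h i)"
    proof (rule sum.mono_neutral_right)
      show "(\<lambda>a. 2 * a) ` {0..e} \<subseteq> {0..d}" using d by auto
      show "\<forall>i\<in>{0..d} - (\<lambda>a. 2 * a) ` {0..e}. h i = 0"
      proof
        fix i assume i: "i \<in> {0..d} - (\<lambda>a. 2 * a) ` {0..e}"
        have "odd i"
        proof
          assume "even i"
          then obtain a where "i = 2 * a" by blast
          with i d show False by auto
        qed
        thus "h i = 0" by (simp add: h_def dil_nth)
      qed
    qed simp
    also have "\<dots> = (\<Sum>a\<in>{0..e}. h (2 * a))"
      by (subst sum.reindex) (auto simp: inj_on_def)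
    also have "\<dots> = (\<Sum>a\<in>{0..e}. f $ a * g $ (e - a))"
      by (rule sum.cong) (auto simp: h_def dil_nth d simp flip: diff_mult_distrib2)
    also have "\<dots> = dil (f * g) $ d" by (simp add: dil_nth d fps_mult_nth)
    finally show ?thesis ..
  qed
qed

lemma dil_one[simp]: "dil 1 = 1"
  by (rule fps_ext) (auto simp: dil_nth)

lemma dil_diff: "dil (f - g) = dil f - dil g"
  by (rule fps_ext) (auto simp: dil_nth)

lemma dil_Xpow: "dil (fps_X ^ j) = fps_X ^ (2 * j)"
  by (rule fps_ext) (auto simp: dil_nth)

lemma dil_prod: "dil (\<Prod>j\<in>{1..(N::nat)}. f j) = (\<Prod>j\<in>{1..N}. dil (f j))"
  by (induction N) (simp_all add: prod.cl_ivl_Suc dil_mult)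

definition E2 :: "nat \<Rightarrow> int fps" where "E2 N = (\<Prod>j\<in>{1..N}. 1 - fps_X ^ (2 * j))"

lemma dil_E: "dil (E N) = E2 N"
  unfolding E_def E2_def dil_prod dil_diff dil_one dil_Xpow ..

lemma eqm_dil: "eqm m f g \<Longrightarrow> eqm m (dil f) (dil g)"
  unfolding eqm_def dil_nth by auto

definition Dp :: "nat \<Rightarrow> int fps" where "Dp N = (\<Prod>j\<in>{1..N}. 1 + fps_X ^ j)"

lemma E_Dp: "E N * Dp N = E2 N"
  unfolding E_def Dp_def E2_def prod.distrib[symmetric]
  by (rule prod.cong) (auto simp: algebra_simps mult_2_right power_add)

lemma Dp_stable: "m \<le> N \<Longrightarrow> eqm m (Dp N) (Dp m)"
  unfolding Dp_def using eqm_one_plus[of m _ 1] by (intro prod_stable) auto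

lemma PF_E: "PF fps_X j = E j"
  by (simp add: PF_def E_def)

lemma QB_P:
  assumes "m \<le> k" "m \<le> N - k" "k \<le> N"
  shows "eqm m (QB fps_X N k) P"
proof -
  let ?Q = "QB fps_X N k"
  have h: "?Q * E k * E (N - k) = E N" using QB_PF[OF assms(3), where q = "fps_X :: int fps"] by (simp add: PF_E)
  have a: "eqm m (?Q * E k * E (N - k)) (?Q * E m * E m)"
    using E_stable assms by (intro eqm_mult) auto
  have b: "eqm m (?Q * E m * E m) (E m)"
    using eqm_trans[OF eqm_sym[OF a]] h E_stable[of m N] assms by simp
  have "eqm m ?Q (?Q * (P * E m) * (P * E m))"
    using eqm_mult[OF eqm_mult[OF eqm_refl[of m ?Q] PE[of m m]] PE[of m m]] by (simp add: eqm_sym)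
  also have "?Q * (P * E m) * (P * E m) = (?Q * E m * E m) * P * P" by (simp add: algebra_simps)
  finally have c: "eqm m ?Q ((?Q * E m * E m) * P * P)" .
  have d: "eqm m ((?Q * E m * E m) * P * P) ((P * E m) * P)"
    using eqm_mult_right[OF eqm_mult_right[OF b, of P], of P] by (simp add: algebra_simps)
  have e: "eqm m ((P * E m) * P) (1 * P)" using eqm_mult_right[OF PE[of m m]] by simp
  show ?thesis using eqm_trans[OF c eqm_trans[OF d e]] by simp
qed



lemma sum_stable:
  assumes "\<And>i. m < i \<Longrightarrow> eqm m (f i) 0" "m \<le> N"
  shows "eqm m (\<Sum>i\<le>N. f i) (\<Sum>i\<le>m. f i)"
  using assms(2)
proof (induction N)
  case 0 thus ?case by simp
next
  case (Suc N)
  show ?case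
  proof (cases "m = Suc N")
    case True thus ?thesis by simp
  next
    case False
    hence mN: "m \<le> N" using Suc by simp
    have "eqm m ((\<Sum>i\<le>N. f i) + f (Suc N)) ((\<Sum>i\<le>m. f i) + 0)"
      using Suc.IH[OF mN] assms(1)[of "Suc N"] mN by (intro eqm_add) auto
    thus ?thesis by simp
  qed
qed

definition TT :: "nat \<Rightarrow> int fps" where "TT m = (\<Sum>i\<le>m. fps_X ^ tri (Suc i))"

lemma tri_Suc_ge: "i \<le> tri (Suc i)" by (simp add: tri_S)

lemma prod_lessThan_Suc_shift1:
  "(\<Prod>i<Suc k. g i) = g 0 * (\<Prod>j\<in>{1..k}. (g j :: int fps))"
proof -
  have "(\<Prod>i<Suc k. g i) = g 0 * (\<Prod>i<k. g (Suc i))" by (rule prod.lessThan_Suc_shift)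
  also have "(\<Prod>i<k. g (Suc i)) = (\<Prod>j\<in>{Suc 0..<Suc k}. g j)"
    using prod.shift_bounds_Suc_ivl[of g 0 k] by (simp add: atLeast0LessThan)
  also have "{Suc 0..<Suc k} = {1..k}" by auto
  finally show ?thesis .
qed

lemma Xpow_term:
  assumes "\<not> m < e \<Longrightarrow> eqm m f g"
  shows "eqm m (f * fps_X ^ e) (g * fps_X ^ e)"
  using eqm_Xpow[of m e f g] assms by (auto simp: mult.commute)

lemma gauss_mod: "eqm m (Dp m * Dp m) (P * TT m)"
proof -
  define n where "n = Suc (2 * m)"
  define S1 where "S1 = (\<Sum>i\<le>n. QB fps_X (2 * n) (n - i) * (fps_X :: int fps) ^ tri (Suc i))"
  define S2 where "S2 = (\<Sum>i\<in>{1..n}. QB fps_X (2 * n) (i + n) * (fps_X :: int fps) ^ tri i)"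
  have J: "DD n = S1 + S2" unfolding S1_def S2_def by (rule finite_JTP)
  have "(\<Prod>i<n. 1 + fps_X ^ i) = (1 + fps_X ^ 0) * (\<Prod>j\<in>{1..2 * m}. 1 + (fps_X :: int fps) ^ j)"
    unfolding n_def by (rule prod_lessThan_Suc_shift1)
  hence "DD n = Dp n * (2 * Dp (2 * m))"
    unfolding DD_def Dp_def by simp
  moreover have "eqm m (Dp n * (2 * Dp (2 * m))) (Dp m * (2 * Dp m))"
    using eqm_mult[OF Dp_stable[of m n] eqm_mult[OF eqm_refl[of m 2] Dp_stable[of m "2 * m"]]]
    by (simp add: n_def)
  ultimately have L: "eqm m (DD n) (2 * (Dp m * Dp m))"
    by (simp only: mult.left_commute)
  have "eqm m S1 (\<Sum>i\<le>n. P * fps_X ^ tri (Suc i))"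
    unfolding S1_def
  proof (rule eqm_sum, rule Xpow_term)
    fix i assume "i \<in> {..n}" "\<not> m < tri (Suc i)"
    hence "i \<le> m" using tri_Suc_ge[of i] by linarith
    thus "eqm m (QB fps_X (2 * n) (n - i)) P" by (intro QB_P) (auto simp: n_def)
  qed
  also have "eqm m (\<Sum>i\<le>n. P * fps_X ^ tri (Suc i)) (\<Sum>i\<le>m. P * fps_X ^ tri (Suc i))"
  proof (rule sum_stable)
    fix i assume "m < i"
    hence "m < tri (Suc i)" using tri_Suc_ge[of i] by linarith
    thus "eqm m (P * fps_X ^ tri (Suc i)) 0" using eqm_Xpow_big[of m "tri (Suc i)" P] by (simp add: mult.commute)
  qed (simp add: n_def)
  finally have A1: "eqm m S1 (P * TT m)" unfolding TT_def by (simp add: sum_distrib_left)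
  define g where "g i = QB fps_X (2 * n) (i + n) * (fps_X :: int fps) ^ tri i" for i
  have "S2 = sum g {Suc 0..Suc (2 * m)}" unfolding S2_def g_def n_def by simp
  also have "\<dots> = (\<Sum>i\<in>{0..2 * m}. g (Suc i))" by (rule sum.shift_bounds_cl_Suc_ivl)
  also have "\<dots> = (\<Sum>i\<in>{0..2 * m}. QB fps_X (2 * n) (Suc i + n) * (fps_X :: int fps) ^ tri (Suc i))"
    unfolding g_def ..
  also have "eqm m \<dots> (\<Sum>i\<le>2 * m. P * fps_X ^ tri (Suc i))"
    unfolding atLeast0AtMost
  proof (rule eqm_sum, rule Xpow_term)
    fix i assume "i \<in> {..2 * m}" "\<not> m < tri (Suc i)"
    hence "i \<le> m" using tri_Suc_ge[of i] by linarith
    thus "eqm m (QB fps_X (2 * n) (Suc i + n)) P" by (intro QB_P) (auto simp: n_def)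
  qed
  also have "eqm m (\<Sum>i\<le>2 * m. P * fps_X ^ tri (Suc i)) (\<Sum>i\<le>m. P * fps_X ^ tri (Suc i))"
  proof (rule sum_stable)
    fix i assume "m < i"
    hence "m < tri (Suc i)" using tri_Suc_ge[of i] by linarith
    thus "eqm m (P * fps_X ^ tri (Suc i)) 0" using eqm_Xpow_big[of m "tri (Suc i)" P] by (simp add: mult.commute)
  qed simp
  finally have A2: "eqm m S2 (P * TT m)" unfolding TT_def by (simp add: sum_distrib_left)
  have L2: "eqm m (2 * (Dp m * Dp m)) (S1 + S2)" using eqm_sym[OF L] unfolding J .
  have "eqm m (2 * (Dp m * Dp m)) (P * TT m + P * TT m)" by (rule eqm_trans[OF L2 eqm_add[OF A1 A2]])
  hence "eqm m (2 * (Dp m * Dp m)) (2 * (P * TT m))" by (simp only: mult_2)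
  thus ?thesis by (rule eqm_cancel2)
qed



lemma main_mod: "eqm m P (TT m * dil (P * P))"
proof -
  let ?D = "Dp m" and ?E = "E m" and ?P2 = "dil P" and ?T = "TT m"
  have G: "eqm m (?D * ?D) (P * ?T)" by (rule gauss_mod)
  have PE1: "eqm m (P * ?E) 1" by (rule PE) simp
  have ED: "?E * ?D = E2 m" by (rule E_Dp)
  have P2E2: "eqm m (?P2 * E2 m) 1"
    using eqm_dil[OF PE1] by (simp add: dil_mult dil_E)
  have 1: "eqm m (?D * ?D * ?E) ?T"
  proof -
    have "eqm m (?D * ?D * ?E) (P * ?T * ?E)" by (rule eqm_mult_right[OF G])
    also have "P * ?T * ?E = ?T * (P * ?E)" by (simp add: ac_simps)
    also have "eqm m (?T * (P * ?E)) (?T * 1)" by (rule eqm_mult_left[OF PE1])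
    finally show ?thesis by simp
  qed
  have 2: "eqm m (?D * ?P2) P"
  proof -
    have "eqm m (?D * ?P2 * 1) (?D * ?P2 * (P * ?E))" by (rule eqm_mult_left[OF eqm_sym[OF PE1]])
    also have "?D * ?P2 * (P * ?E) = (?P2 * (?E * ?D)) * P" by (simp add: ac_simps)
    also have "\<dots> = (?P2 * E2 m) * P" by (simp only: ED)
    also have "eqm m ((?P2 * E2 m) * P) (1 * P)" by (rule eqm_mult_right[OF P2E2])
    finally show ?thesis by simp
  qed
  have "eqm m (?T * dil (P * P)) (?D * ?D * ?E * (?P2 * ?P2))"
    unfolding dil_mult by (rule eqm_mult_right[OF eqm_sym[OF 1]])
  also have "?D * ?D * ?E * (?P2 * ?P2) = ?E * (?D * ?P2) * (?D * ?P2)" by (simp add: ac_simps)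
  also have "eqm m (?E * (?D * ?P2) * (?D * ?P2)) (?E * P * P)"
    by (intro eqm_mult 2 eqm_refl)
  also have "?E * P * P = (P * ?E) * P" by (simp add: ac_simps)
  also have "eqm m ((P * ?E) * P) (1 * P)" by (rule eqm_mult_right[OF PE1])
  finally show ?thesis by (simp add: eqm_sym)
qed

lemma PP_nth: "(P * P) $ e = int (p2 (int e))"
proof -
  have "(P * P) $ e = (\<Sum>i=0..e. int (p (int i)) * int (p (int (e - i))))"
    by (simp add: fps_mult_nth P_def)
  also have "\<dots> = (\<Sum>i=0..e. int (p (int i)) * int (p (int e - int i)))"
    by (rule sum.cong) (auto simp: of_nat_diff)
  also have "\<dots> = int (p2 (int e))" by (simp add: p2_def)
  finally show ?thesis .
qed

lemma coeff_formula:
  "int (p (int m)) = (\<Sum>k\<in>{1..Suc m}. if tri k \<le> m \<and> even (m - tri k) then int (p2 (int ((m - tri k) div 2))) else 0)"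
proof -
  have "int (p (int m)) = P $ m" by (simp add: P_def)
  also have "\<dots> = (TT m * dil (P * P)) $ m" using main_mod[of m] by (simp add: eqm_def)
  also have "\<dots> = (\<Sum>i\<le>m. (fps_X ^ tri (Suc i) * dil (P * P)) $ m)"
    by (simp add: TT_def sum_distrib_right fps_sum_nth)
  also have "\<dots> = (\<Sum>i\<in>{0..m}. (\<lambda>k. if tri k \<le> m \<and> even (m - tri k) then int (p2 (int ((m - tri k) div 2))) else 0) (Suc i))"
    unfolding atLeast0AtMost
    by (rule sum.cong) (auto simp: fps_X_power_mult_nth dil_nth PP_nth)
  also have "\<dots> = (\<Sum>k\<in>{Suc 0..Suc m}. if tri k \<le> m \<and> even (m - tri k) then int (p2 (int ((m - tri k) div 2))) else 0)"
    by (rule sum.shift_bounds_cl_Suc_ivl[symmetric])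
  finally show ?thesis by simp
qed



lemma tri_ge: "k \<le> Suc (tri k)"
  by (induction k) (auto simp: tri_S)

lemma tri_int: "int (tri k) = (int k * (int k - 1)) div 2"
proof -
  have "2 * tri k + k = k * k" by (rule tri2)
  hence "2 * int (tri k) = int k * (int k - 1)"
    by (simp add: algebra_simps) (metis of_nat_add of_nat_mult of_nat_numeral add_diff_cancel_right')
  thus ?thesis by simp
qed

lemma tri_4: "tri (k + 4) = tri k + 4 * k + 6"
proof -
  have "tri 4 = 6" by (simp add: tri_def)
  thus ?thesis by (simp add: tri_add)
qed

lemma tri_parity: "even (tri k) \<longleftrightarrow> (k mod 4 = 0 \<or> k mod 4 = 1)"
proof (induction k rule: less_induct)
  case (less k)
  show ?case
  proof (cases "k < 4")
    case True
    hence "k = 0 \<or> k = 1 \<or> k = 2 \<or> k = 3" by auto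
    thus ?thesis by (auto simp: tri_def)
  next
    case False
    then obtain j where k: "k = j + 4" by (metis add.commute le_add_diff_inverse not_less)
    have "even (tri k) \<longleftrightarrow> even (tri j)" unfolding k tri_4 by simp
    also have "\<dots> \<longleftrightarrow> (j mod 4 = 0 \<or> j mod 4 = 1)" using less.IH[of j] k by simp
    also have "\<dots> \<longleftrightarrow> (k mod 4 = 0 \<or> k mod 4 = 1)" unfolding k by simp
    finally show ?thesis .
  qed
qed

definition kE :: "nat \<Rightarrow> nat" where "kE i = (if odd i then 2 * i - 1 else 2 * i)"
definition kO :: "nat \<Rightarrow> nat" where "kO i = (if odd i then 2 * i else 2 * i - 1)"

lemma te_tri: assumes "1 \<le> i" shows "te i = int (tri (kE i))"
proof (cases "odd i")
  case True
  hence "int (2 * i - 1) = 2 * int i - 1" using assms by auto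
  thus ?thesis using True unfolding te_def kE_def tri_int by (simp add: algebra_simps)
next
  case False
  thus ?thesis unfolding te_def kE_def tri_int by (simp add: algebra_simps)
qed

lemma to_tri: assumes "1 \<le> i" shows "to i = int (tri (kO i))"
proof (cases "odd i")
  case True
  thus ?thesis unfolding to_def kO_def tri_int by (simp add: algebra_simps)
next
  case False
  hence "int (2 * i - 1) = 2 * int i - 1" using assms by auto
  thus ?thesis using False unfolding to_def kO_def tri_int by (simp add: algebra_simps)
qed


definition jE :: "nat \<Rightarrow> nat" where "jE k = (if k mod 4 = 1 then (k + 1) div 2 else k div 2)"
definition jO :: "nat \<Rightarrow> nat" where "jO k = (if k mod 4 = 3 then (k + 1) div 2 else k div 2)"

lemma m4a[simp]: "(4 * b) mod 4 = (0::nat)" "Suc (4 * b) mod 4 = (1::nat)" "Suc (Suc (4 * b)) mod 4 = (2::nat)" "Suc (Suc (Suc (4 * b))) mod 4 = (3::nat)"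
  by presburger+
lemma d2: "(4 * b) div 2 = 2 * (b::nat)" "(4 * b + 1 + 1) div 2 = 2 * b + 1" "(4 * b + 2) div 2 = 2 * b + 1" "(4 * b + 3 + 1) div 2 = 2 * b + 2"
  by simp_all
lemma ev2: "even (2 * (b::nat))" "odd (2 * (b::nat) + 1)" "even (2 * b + 2::nat)" by simp_all

lemma split4: fixes k :: nat obtains a where "k = 4 * a" | a where "k = 4 * a + 1" | a where "k = 4 * a + 2" | a where "k = 4 * a + 3"
proof -
  have "k = 4 * (k div 4) + k mod 4" by simp
  moreover have "k mod 4 < 4" by simp
  hence "k mod 4 = 0 \<or> k mod 4 = 1 \<or> k mod 4 = 2 \<or> k mod 4 = 3" by linarith
  ultimately show ?thesis using that by (metis add.right_neutral)
qed

lemma split2: obtains b where "i = 2 * b" | b where "i = 2 * b + (1::nat)"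
  by (metis evenE oddE)

lemma jE_kE: "1 \<le> i \<Longrightarrow> jE (kE i) = i"
proof (cases i rule: split2)
  case (1 b) hence "kE i = 4 * b" by (simp add: kE_def)
  thus ?thesis using 1 by (simp add: jE_def)
next
  case (2 b) hence "kE i = 4 * b + 1" by (simp add: kE_def)
  thus ?thesis using 2 by (simp add: jE_def)
qed

lemma kE_jE: assumes "1 \<le> k" "k mod 4 = 0 \<or> k mod 4 = 1" shows "kE (jE k) = k \<and> 1 \<le> jE k"
proof (cases k rule: split4)
  case (1 a)
  hence "1 \<le> a" using assms by simp
  thus ?thesis using 1 by (simp add: jE_def kE_def)
next
  case (2 a) thus ?thesis by (simp add: jE_def kE_def)
qed (use assms in simp_all)

lemma kE_good: assumes "1 \<le> i" shows "(kE i mod 4 = 0 \<or> kE i mod 4 = 1) \<and> 1 \<le> kE i"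
proof (cases i rule: split2)
  case (1 b)
  hence "1 \<le> b" using assms by simp
  thus ?thesis using 1 by (simp add: kE_def)
next
  case (2 b) thus ?thesis by (simp add: kE_def)
qed

lemma jO_kO: "1 \<le> i \<Longrightarrow> jO (kO i) = i"
proof (cases i rule: split2)
  case (1 b)
  assume "1 \<le> i"
  then obtain c where "b = Suc c" using 1 by (cases b) auto
  hence "kO i = 4 * c + 3" using 1 by (simp add: kO_def)
  thus ?thesis using 1 \<open>b = Suc c\<close> by (simp add: jO_def)
next
  case (2 b) hence "kO i = 4 * b + 2" by (simp add: kO_def)
  thus ?thesis using 2 by (simp add: jO_def)
qed

lemma kO_jO: assumes "1 \<le> k" "k mod 4 = 2 \<or> k mod 4 = 3" shows "kO (jO k) = k \<and> 1 \<le> jO k"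
proof (cases k rule: split4)
  case (3 a) thus ?thesis by (simp add: jO_def kO_def)
next
  case (4 a) thus ?thesis by (simp add: jO_def kO_def)
qed (use assms in simp_all)

lemma kO_good: "1 \<le> i \<Longrightarrow> (kO i mod 4 = 2 \<or> kO i mod 4 = 3) \<and> 1 \<le> kO i"
proof (cases i rule: split2)
  case (1 b)
  assume "1 \<le> i"
  then obtain c where "b = Suc c" using 1 by (cases b) auto
  thus ?thesis using 1 by (simp add: kO_def)
next
  case (2 b) thus ?thesis by (simp add: kO_def)
qed

lemma parE: assumes "even m" "tri k \<le> m"
  shows "even (m - tri k) \<longleftrightarrow> (k mod 4 = 0 \<or> k mod 4 = 1)"
proof -
  have "even (m - tri k) \<longleftrightarrow> even (tri k)" using assms by (auto simp: even_diff_nat)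
  thus ?thesis using tri_parity by simp
qed

lemma parO: assumes "odd m" "tri k \<le> m"
  shows "even (m - tri k) \<longleftrightarrow> (k mod 4 = 2 \<or> k mod 4 = 3)"
proof -
  have "even (m - tri k) \<longleftrightarrow> odd (tri k)" using assms by (auto simp: even_diff_nat)
  also have "\<dots> \<longleftrightarrow> \<not> (k mod 4 = 0 \<or> k mod 4 = 1)" using tri_parity by simp
  also have "\<dots> \<longleftrightarrow> (k mod 4 = 2 \<or> k mod 4 = 3)" by linarith
  finally show ?thesis .
qed

lemma reindex_gen:
  fixes t :: "nat \<Rightarrow> int" and kf jf :: "nat \<Rightarrow> nat" and good :: "nat \<Rightarrow> bool"
  assumes tt: "\<And>i. 1 \<le> i \<Longrightarrow> t i = int (tri (kf i))"
    and jk: "\<And>i. 1 \<le> i \<Longrightarrow> jf (kf i) = i"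
    and kj: "\<And>k. 1 \<le> k \<Longrightarrow> good k \<Longrightarrow> kf (jf k) = k \<and> 1 \<le> jf k"
    and kg: "\<And>i. 1 \<le> i \<Longrightarrow> good (kf i) \<and> 1 \<le> kf i"
    and par: "\<And>k. tri k \<le> m \<Longrightarrow> even (m - tri k) \<longleftrightarrow> good k"
  shows "(\<Sum>i | 1 \<le> i \<and> t i \<le> int m. int (p2 ((int m - t i) div 2)))
       = (\<Sum>k\<in>{1..Suc m}. if tri k \<le> m \<and> even (m - tri k) then int (p2 (int ((m - tri k) div 2))) else 0)"
proof -
  define K where "K = {k \<in> {1..Suc m}. tri k \<le> m \<and> even (m - tri k)}"
  have R: "(\<Sum>k\<in>{1..Suc m}. if tri k \<le> m \<and> even (m - tri k) then int (p2 (int ((m - tri k) div 2))) else 0)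
      = (\<Sum>k\<in>K. int (p2 (int ((m - tri k) div 2))))"
    unfolding K_def by (rule sum.inter_filter[symmetric]) simp
  have L: "(\<Sum>i | 1 \<le> i \<and> t i \<le> int m. int (p2 ((int m - t i) div 2)))
      = (\<Sum>k\<in>K. int (p2 (int ((m - tri k) div 2))))"
  proof (rule sum.reindex_bij_witness[where j = kf and i = jf])
    fix a assume a: "a \<in> {i. 1 \<le> i \<and> t i \<le> int m}"
    hence a1: "1 \<le> a" and a2: "tri (kf a) \<le> m" using tt[of a] by auto
    show "jf (kf a) = a" using jk a1 .
    show "kf a \<in> K" unfolding K_def using kg[OF a1] a2 par[OF a2] tri_ge[of "kf a"] by auto
    have "int (m - tri (kf a)) = int m - t a" using a2 tt[OF a1] by simp
    thus "int (p2 (int ((m - tri (kf a)) div 2))) = int (p2 ((int m - t a) div 2))"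
      by (metis zdiv_int of_nat_numeral)
  next
    fix b assume b: "b \<in> K"
    hence b1: "1 \<le> b" and b2: "tri b \<le> m" and b3: "good b" using par unfolding K_def by auto
    show "kf (jf b) = b" using kj[OF b1 b3] by simp
    have "t (jf b) = int (tri b)" using kj[OF b1 b3] tt[of "jf b"] by simp
    thus "jf b \<in> {i. 1 \<le> i \<and> t i \<le> int m}" using kj[OF b1 b3] b2 by simp
  qed
  show ?thesis using L R by simp
qed


theorem theorem5:
  fixes n :: int
  shows "(even n \<longrightarrow> int (p n) = (\<Sum>i | 1 \<le> i \<and> te i \<le> n. int (p2 ((n - te i) div 2))))
       \<and> (odd n \<longrightarrow> int (p n) = (\<Sum>i | 1 \<le> i \<and> to i \<le> n. int (p2 ((n - to i) div 2))))"
proof (cases "n < 0")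
  case True
  have e1: "{i. 1 \<le> i \<and> te i \<le> n} = {}" using True te_tri by force
  have e2: "{i. 1 \<le> i \<and> to i \<le> n} = {}" using True to_tri by force
  have "p n = 0" using True by (simp add: p_def)
  thus ?thesis unfolding e1 e2 by simp
next
  case False
  then obtain m where n: "n = int m" by (metis nonneg_int_cases not_less)
  have C: "int (p (int m)) = (\<Sum>k\<in>{1..Suc m}. if tri k \<le> m \<and> even (m - tri k) then int (p2 (int ((m - tri k) div 2))) else 0)"
    by (rule coeff_formula)
  have EV: "even n \<Longrightarrow> int (p n) = (\<Sum>i | 1 \<le> i \<and> te i \<le> n. int (p2 ((n - te i) div 2)))"
  proof -
    assume "even n"
    hence em: "even m" using n by simp
    show ?thesis unfolding n C
    proof (rule reindex_gen[where kf = kE and jf = jE and good = "\<lambda>k. k mod 4 = 0 \<or> k mod 4 = 1", symmetric])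
      show "\<And>i. 1 \<le> i \<Longrightarrow> te i = int (tri (kE i))" by (rule te_tri)
      show "\<And>i. 1 \<le> i \<Longrightarrow> jE (kE i) = i" by (rule jE_kE)
      show "\<And>k. 1 \<le> k \<Longrightarrow> k mod 4 = 0 \<or> k mod 4 = 1 \<Longrightarrow> kE (jE k) = k \<and> 1 \<le> jE k"
        by (rule kE_jE)
      show "\<And>i. 1 \<le> i \<Longrightarrow> (kE i mod 4 = 0 \<or> kE i mod 4 = 1) \<and> 1 \<le> kE i"
        by (rule kE_good)
      show "\<And>k. tri k \<le> m \<Longrightarrow> even (m - tri k) \<longleftrightarrow> (k mod 4 = 0 \<or> k mod 4 = 1)"
        using em by (rule parE)
    qed
  qed
  have OD: "odd n \<Longrightarrow> int (p n) = (\<Sum>i | 1 \<le> i \<and> to i \<le> n. int (p2 ((n - to i) div 2)))"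
  proof -
    assume "odd n"
    hence om: "odd m" using n by simp
    show ?thesis unfolding n C
    proof (rule reindex_gen[where kf = kO and jf = jO and good = "\<lambda>k. k mod 4 = 2 \<or> k mod 4 = 3", symmetric])
      show "\<And>i. 1 \<le> i \<Longrightarrow> to i = int (tri (kO i))" by (rule to_tri)
      show "\<And>i. 1 \<le> i \<Longrightarrow> jO (kO i) = i" by (rule jO_kO)
      show "\<And>k. 1 \<le> k \<Longrightarrow> k mod 4 = 2 \<or> k mod 4 = 3 \<Longrightarrow> kO (jO k) = k \<and> 1 \<le> jO k"
        by (rule kO_jO)
      show "\<And>i. 1 \<le> i \<Longrightarrow> (kO i mod 4 = 2 \<or> kO i mod 4 = 3) \<and> 1 \<le> kO i"
        by (rule kO_good)
      show "\<And>k. tri k \<le> m \<Longrightarrow> even (m - tri k) \<longleftrightarrow> (k mod 4 = 2 \<or> k mod 4 = 3)"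
        using om by (rule parO)
    qed
  qed
  show ?thesis using EV OD by blast
qed


end
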